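(* Let $X,Y$ be non-empty subsets of $A^+$. (i) $XY$ and $YX$ are both prefix (resp. maximal prefix) alt-induced codes if and only if $X$ and $Y$ are prefix (resp. maximal prefix) codes. (ii) $XY$ and $YX$ are both suffix (resp. maximal suffix) alt-induced codes if and only if $X$ and $Y$ are suffix (resp. maximal suffix) codes. (iii) $XY$ and $YX$ are both bifix (resp. thin maximal bifix) alt-induced codes if and only if $X$ and $Y$ are bifix (resp. thin maximal bifix) codes.
   Context: $A$ is a finite alphabet, $A^*$ the set of words, $A^+$ the non-empty words, $XY=\{xy:x\in X,y\in Y\}$. A code is a subset of $A^+$ in which every word has at most one factorization into its elements. A prefix (suffix) code is a subset of $A^+$ in which no word is a proper prefix (suffix) of another; a bifix code is both; such a code is maximal if not properly contained in another prefix (suffix, bifix) code over $A$. A set is thin if some word of $A^*$ is not a factor of any of its words. For non-empty $X,Y\subseteq A^+$, $(X,Y)$ is an alternative code if no word of $A^+$ admits two different similar alternative factorizations on $(X,Y)$ (factorizations $u_1\cdots u_n$, $n\ge2$, $u_i\in X\cup Y$, alternating between $X$ and $Y$; similar = beginning in the same set and ending in the same set); equivalently, $XY$ is a code and each element of $XY$ has exactly one factorization $xy$ with $x\in X,y\in Y$. An alt-induced code is a set $Z$ with $Z=UV$ for some alternative code $(U,V)$; a prefix (suffix, bifix, maximal prefix, etc.) alt-induced code is an alt-induced code which is also a prefix (suffix, bifix, maximal prefix, etc.) code. *)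

theory Defs
  imports Main "HOL-Library.Sublist"
begin

text \<open>Words over the finite alphabet A are lists over a finite type 'a (A = UNIV).
A^+ is the set of non-empty lists.\<close>

definition plus_words :: "'a list set" where
  "plus_words = {w. w \<noteq> []}"

definition conc :: "'a list set \<Rightarrow> 'a list set \<Rightarrow> 'a list set" where
  "conc X Y = {x @ y | x y. x \<in> X \<and> y \<in> Y}"

definition is_code :: "'a list set \<Rightarrow> bool" where
  "is_code X \<longleftrightarrow> X \<subseteq> plus_words \<and>
     (\<forall>us vs. set us \<subseteq> X \<and> set vs \<subseteq> X \<and> concat us = concat vs \<longrightarrow> us = vs)"

definition prefix_code :: "'a list set \<Rightarrow> bool" where
  "prefix_code X \<longleftrightarrow> X \<subseteq> plus_words \<and> (\<forall>u\<in>X. \<forall>v\<in>X. \<not> strict_prefix u v)"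

definition suffix_code :: "'a list set \<Rightarrow> bool" where
  "suffix_code X \<longleftrightarrow> X \<subseteq> plus_words \<and> (\<forall>u\<in>X. \<forall>v\<in>X. \<not> strict_suffix u v)"

definition bifix_code :: "'a list set \<Rightarrow> bool" where
  "bifix_code X \<longleftrightarrow> prefix_code X \<and> suffix_code X"

definition maximal_prefix_code :: "'a list set \<Rightarrow> bool" where
  "maximal_prefix_code X \<longleftrightarrow> prefix_code X \<and> (\<forall>Z. prefix_code Z \<and> X \<subseteq> Z \<longrightarrow> Z = X)"

definition maximal_suffix_code :: "'a list set \<Rightarrow> bool" where
  "maximal_suffix_code X \<longleftrightarrow> suffix_code X \<and> (\<forall>Z. suffix_code Z \<and> X \<subseteq> Z \<longrightarrow> Z = X)"

definition maximal_bifix_code :: "'a list set \<Rightarrow> bool" where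
  "maximal_bifix_code X \<longleftrightarrow> bifix_code X \<and> (\<forall>Z. bifix_code Z \<and> X \<subseteq> Z \<longrightarrow> Z = X)"

definition thin :: "'a list set \<Rightarrow> bool" where
  "thin X \<longleftrightarrow> (\<exists>w. \<forall>x\<in>X. \<not> sublist w x)"

text \<open>An alternative factorization on (X,Y) starting in X (s = True) or in Y (s = False):
a list u_1 ... u_n, n \<ge> 2, whose entries alternate between X and Y.\<close>
definition alt_fact :: "'a list set \<Rightarrow> 'a list set \<Rightarrow> bool \<Rightarrow> 'a list list \<Rightarrow> bool" where
  "alt_fact X Y s us \<longleftrightarrow> length us \<ge> 2 \<and>
     (\<forall>i<length us. us ! i \<in> (if (even i \<longleftrightarrow> s) then X else Y))"

text \<open>(X,Y) is an alternative code: X, Y non-empty subsets of A^+, and no word has two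
different similar alternative factorizations (same starting set, same ending set;
given the same start, the same end means the same parity of the length).\<close>
definition alt_code :: "'a list set \<Rightarrow> 'a list set \<Rightarrow> bool" where
  "alt_code X Y \<longleftrightarrow> X \<noteq> {} \<and> Y \<noteq> {} \<and> X \<subseteq> plus_words \<and> Y \<subseteq> plus_words \<and>
     (\<forall>s us vs. alt_fact X Y s us \<and> alt_fact X Y s vs \<and>
        (even (length us) \<longleftrightarrow> even (length vs)) \<and> concat us = concat vs \<longrightarrow> us = vs)"

definition alt_induced :: "'a list set \<Rightarrow> bool" where
  "alt_induced Z \<longleftrightarrow> (\<exists>U V. alt_code U V \<and> Z = conc U V)"

end

theory Submission imports Defs begin

lemma conc_iff: "z \<in> conc X Y \<longleftrightarrow> (\<exists>x\<in>X. \<exists>y\<in>Y. z = x@y)"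
  unfolding conc_def by blast

lemma pc_eq: "prefix_code Z \<Longrightarrow> a\<in>Z \<Longrightarrow> b\<in>Z \<Longrightarrow> prefix a b \<or> prefix b a \<Longrightarrow> a = b"
  unfolding prefix_code_def strict_prefix_def by blast

lemma sc_eq: "suffix_code Z \<Longrightarrow> a\<in>Z \<Longrightarrow> b\<in>Z \<Longrightarrow> suffix a b \<or> suffix b a \<Longrightarrow> a = b"
  unfolding suffix_code_def strict_suffix_def by blast

lemma plus_app: "x \<in> plus_words \<Longrightarrow> x @ y \<in> plus_words"
  by (simp add: plus_words_def)
lemma plus_app2: "y \<in> plus_words \<Longrightarrow> x @ y \<in> plus_words"
  by (simp add: plus_words_def)

lemma prefix_conc: assumes "prefix_code X" "prefix_code Y" shows "prefix_code (conc X Y)"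
  unfolding prefix_code_def
proof safe
  show "z \<in> plus_words" if "z \<in> conc X Y" for z
    using that assms unfolding conc_iff prefix_code_def plus_words_def by fastforce
  fix u v assume u: "u \<in> conc X Y" and v: "v \<in> conc X Y" and sp: "strict_prefix u v"
  obtain x1 y1 where 1: "x1\<in>X" "y1\<in>Y" "u = x1@y1" using u conc_iff by blast
  obtain x2 y2 where 2: "x2\<in>X" "y2\<in>Y" "v = x2@y2" using v conc_iff by blast
  have "prefix x1 v" using sp 1 unfolding strict_prefix_def prefix_def by auto
  moreover have "prefix x2 v" using 2 by simp
  ultimately have "prefix x1 x2 \<or> prefix x2 x1" by (rule prefix_same_cases)
  hence "x1 = x2" using pc_eq[OF assms(1)] 1 2 by blast
  hence "strict_prefix y1 y2" using sp 1 2 by (simp add: strict_prefix_def)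
  thus False using assms(2) 1 2 unfolding prefix_code_def by blast
qed

lemma suffix_conc: assumes "suffix_code X" "suffix_code Y" shows "suffix_code (conc X Y)"
  unfolding suffix_code_def
proof safe
  show "z \<in> plus_words" if "z \<in> conc X Y" for z
    using that assms unfolding conc_iff suffix_code_def plus_words_def by fastforce
  fix u v assume u: "u \<in> conc X Y" and v: "v \<in> conc X Y" and sp: "strict_suffix u v"
  obtain x1 y1 where 1: "x1\<in>X" "y1\<in>Y" "u = x1@y1" using u conc_iff by blast
  obtain x2 y2 where 2: "x2\<in>X" "y2\<in>Y" "v = x2@y2" using v conc_iff by blast
  have "suffix y1 v" using sp 1 unfolding strict_suffix_def suffix_def by auto
  moreover have "suffix y2 v" using 2 by (simp add: suffix_def)
  ultimately have "suffix y1 y2 \<or> suffix y2 y1" by (rule suffix_same_cases)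
  hence "y1 = y2" using sc_eq[OF assms(2)] 1 2 by blast
  hence "strict_suffix x1 x2" using sp 1 2 by (auto simp add: strict_suffix_def suffix_def)
  thus False using assms(1) 1 2 unfolding suffix_code_def by blast
qed

lemma prefix_right: assumes "prefix_code (conc X Y)" "X \<noteq> {}" "Y \<subseteq> plus_words"
  shows "prefix_code Y"
  unfolding prefix_code_def
proof safe
  show "y \<in> plus_words" if "y\<in>Y" for y using that assms by auto
  fix u v assume "u\<in>Y" "v\<in>Y" "strict_prefix u v"
  obtain x where "x\<in>X" using assms by auto
  hence "x@u \<in> conc X Y" "x@v \<in> conc X Y" using \<open>u\<in>Y\<close> \<open>v\<in>Y\<close> conc_iff by blast+
  moreover have "strict_prefix (x@u) (x@v)" using \<open>strict_prefix u v\<close> by (simp add: strict_prefix_def)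
  ultimately show False using assms(1) unfolding prefix_code_def by blast
qed

lemma suffix_left: assumes "suffix_code (conc X Y)" "Y \<noteq> {}" "X \<subseteq> plus_words"
  shows "suffix_code X"
  unfolding suffix_code_def
proof safe
  show "y \<in> plus_words" if "y\<in>X" for y using that assms by auto
  fix u v assume "u\<in>X" "v\<in>X" "strict_suffix u v"
  obtain y where "y\<in>Y" using assms by auto
  hence "u@y \<in> conc X Y" "v@y \<in> conc X Y" using \<open>u\<in>X\<close> \<open>v\<in>X\<close> conc_iff by blast+
  moreover have "strict_suffix (u@y) (v@y)" using \<open>strict_suffix u v\<close> by (auto simp add: strict_suffix_def suffix_def)
  ultimately show False using assms(1) unfolding suffix_code_def by blast
qed


lemma concat_nonempty_nil:
  "\<forall>v\<in>set vs. v \<noteq> [] \<Longrightarrow> concat vs = [] \<Longrightarrow> vs = []"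
  by (cases vs) auto

lemma alt_pre_aux:
  assumes pX: "prefix_code X" and pY: "prefix_code Y"
  shows "\<forall>i<length us. us ! i \<in> (if (even i \<longleftrightarrow> s) then X else Y) \<Longrightarrow>
         \<forall>i<length vs. vs ! i \<in> (if (even i \<longleftrightarrow> s) then X else Y) \<Longrightarrow>
         concat us = concat vs \<Longrightarrow> us = vs"
proof (induction us arbitrary: s vs)
  case Nil
  have "\<forall>v\<in>set vs. v \<noteq> []"
  proof
    fix v assume "v \<in> set vs"
    then obtain i where "i < length vs" "v = vs ! i" by (auto simp: in_set_conv_nth)
    hence "v \<in> X \<union> Y" using Nil(2) by (metis UnI1 UnI2)
    thus "v \<noteq> []" using pX pY unfolding prefix_code_def plus_words_def by blast
  qed
  thus ?case using Nil(3) concat_nonempty_nil by auto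
next
  case (Cons a us)
  have a: "a \<in> (if s then X else Y)" using Cons(2)[rule_format, of 0] by simp
  have ane: "a \<noteq> []" using a pX pY unfolding prefix_code_def plus_words_def by (auto split: if_splits)
  obtain b vs' where vs: "vs = b # vs'" using Cons(4) ane by (cases vs) auto
  have b: "b \<in> (if s then X else Y)" using Cons(3)[rule_format, of 0] vs by simp
  have eq: "a @ concat us = b @ concat vs'" using Cons(4) vs by simp
  have "prefix a (b @ concat vs')" using eq by (metis prefix_def)
  moreover have "prefix b (b @ concat vs')" by simp
  ultimately have "prefix a b \<or> prefix b a" by (rule prefix_same_cases)
  hence ab: "a = b" using a b pc_eq[OF pX] pc_eq[OF pY] by (auto split: if_splits)
  have 1: "\<forall>i<length us. us ! i \<in> (if (even i \<longleftrightarrow> \<not> s) then X else Y)"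
  proof (intro allI impI)
    fix i assume "i < length us"
    thus "us ! i \<in> (if (even i \<longleftrightarrow> \<not> s) then X else Y)" using Cons(2)[rule_format, of "Suc i"] by (auto split: if_splits)
  qed
  have 2: "\<forall>i<length vs'. vs' ! i \<in> (if (even i \<longleftrightarrow> \<not> s) then X else Y)"
  proof (intro allI impI)
    fix i assume "i < length vs'"
    thus "vs' ! i \<in> (if (even i \<longleftrightarrow> \<not> s) then X else Y)" using Cons(3)[rule_format, of "Suc i"] vs by (auto split: if_splits)
  qed
  have "concat us = concat vs'" using eq ab by simp
  hence "us = vs'" using Cons.IH[OF 1 2] by simp
  thus ?case using ab vs by simp
qed

lemma alt_prefix:
  assumes "prefix_code X" "prefix_code Y" "X \<noteq> {}" "Y \<noteq> {}"
  shows "alt_code X Y"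
  unfolding alt_code_def alt_fact_def
  using assms alt_pre_aux[OF assms(1,2)] unfolding prefix_code_def by blast

lemma alt_suf_aux:
  assumes pX: "suffix_code X" and pY: "suffix_code Y"
  shows "\<forall>i<length us. us ! i \<in> (if (even i \<longleftrightarrow> s) then X else Y) \<Longrightarrow>
         \<forall>i<length vs. vs ! i \<in> (if (even i \<longleftrightarrow> s) then X else Y) \<Longrightarrow>
         (even (length us) \<longleftrightarrow> even (length vs)) \<Longrightarrow>
         concat us = concat vs \<Longrightarrow> us = vs"
proof (induction us arbitrary: vs rule: rev_induct)
  case Nil
  have "\<forall>v\<in>set vs. v \<noteq> []"
  proof
    fix v assume "v \<in> set vs"
    then obtain i where "i < length vs" "v = vs ! i" by (auto simp: in_set_conv_nth)
    hence "v \<in> X \<union> Y" using Nil(2) by (metis UnI1 UnI2)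
    thus "v \<noteq> []" using pX pY unfolding suffix_code_def plus_words_def by blast
  qed
  thus ?case using Nil(4) concat_nonempty_nil by auto
next
  case (snoc a us)
  let ?S = "\<lambda>i. (if (even i \<longleftrightarrow> s) then X else Y)"
  have a: "a \<in> ?S (length us)" using snoc(2)[rule_format, of "length us"] by (simp add: nth_append)
  have ane: "a \<noteq> []" using a pX pY unfolding suffix_code_def plus_words_def by (auto split: if_splits)
  obtain b vs' where vs: "vs = vs' @ [b]" using snoc(5) ane by (cases vs rule: rev_cases) auto
  have b: "b \<in> ?S (length vs')" using snoc(3)[rule_format, of "length vs'"] vs by (simp add: nth_append)
  have par: "even (length us) \<longleftrightarrow> even (length vs')" using snoc(4) vs by simp
  have eq: "concat us @ a = concat vs' @ b" using snoc(5) vs by simp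
  have "suffix a (concat vs' @ b)" using eq by (metis suffix_def)
  moreover have "suffix b (concat vs' @ b)" by (simp add: suffix_def)
  ultimately have "suffix a b \<or> suffix b a" by (rule suffix_same_cases)
  moreover have "?S (length us) = ?S (length vs')" using par by simp
  ultimately have ab: "a = b" using a b sc_eq[OF pX] sc_eq[OF pY] by (auto split: if_splits)
  have 1: "\<forall>i<length us. us ! i \<in> ?S i"
  proof (intro allI impI)
    fix i assume "i < length us"
    thus "us ! i \<in> ?S i" using snoc(2)[rule_format, of i] by (simp add: nth_append)
  qed
  have 2: "\<forall>i<length vs'. vs' ! i \<in> ?S i"
  proof (intro allI impI)
    fix i assume "i < length vs'"
    thus "vs' ! i \<in> ?S i" using snoc(3)[rule_format, of i] vs by (simp add: nth_append)
  qed
  have "concat us = concat vs'" using eq ab by simp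
  hence "us = vs'" using snoc.IH[OF 1 2 par] by simp
  thus ?case using ab vs by simp
qed

lemma alt_suffix:
  assumes "suffix_code X" "suffix_code Y" "X \<noteq> {}" "Y \<noteq> {}"
  shows "alt_code X Y"
  unfolding alt_code_def alt_fact_def
  using assms alt_suf_aux[OF assms(1,2)] unfolding suffix_code_def by blast


lemma maxp_complete:
  assumes "maximal_prefix_code X" "X \<noteq> {}"
  shows "\<exists>x\<in>X. prefix x u \<or> prefix u x"
proof (rule ccontr)
  assume nc: "\<not> ?thesis"
  have une: "u \<noteq> []" using nc assms(2) by auto
  have "prefix_code (insert u X)"
    using assms(1) nc une unfolding maximal_prefix_code_def prefix_code_def plus_words_def strict_prefix_def
    by auto
  hence "insert u X = X" using assms(1) unfolding maximal_prefix_code_def by blast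
  thus False using nc by auto
qed

lemma maxs_complete:
  assumes "maximal_suffix_code X" "X \<noteq> {}"
  shows "\<exists>x\<in>X. suffix x u \<or> suffix u x"
proof (rule ccontr)
  assume nc: "\<not> ?thesis"
  have une: "u \<noteq> []" using nc assms(2) by auto
  have "suffix_code (insert u X)"
    using assms(1) nc une unfolding maximal_suffix_code_def suffix_code_def plus_words_def strict_suffix_def
    by auto
  hence "insert u X = X" using assms(1) unfolding maximal_suffix_code_def by blast
  thus False using nc by auto
qed

lemma pcomp_conc:
  assumes "\<forall>u. \<exists>x\<in>X. prefix x u \<or> prefix u x" "\<forall>u. \<exists>y\<in>Y. prefix y u \<or> prefix u y"
  shows "\<exists>e\<in>conc X Y. prefix e z \<or> prefix z e"
proof -
  obtain x where x: "x \<in> X" "prefix x z \<or> prefix z x" using assms(1) by blast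
  show ?thesis
  proof (cases "prefix x z")
    case True
    then obtain r where r: "z = x @ r" by (auto simp: prefix_def)
    obtain y where y: "y \<in> Y" "prefix y r \<or> prefix r y" using assms(2) by blast
    have "x @ y \<in> conc X Y" using x y conc_iff by blast
    moreover have "prefix (x@y) z \<or> prefix z (x@y)" using y r by auto
    ultimately show ?thesis by blast
  next
    case False
    hence zx: "prefix z x" using x by blast
    obtain y where y: "y \<in> Y" using assms(2) by blast
    have "x @ y \<in> conc X Y" using x y conc_iff by blast
    moreover have "prefix z (x@y)" using zx by (metis prefix_append)
    ultimately show ?thesis by blast
  qed
qed

lemma scomp_conc:
  assumes "\<forall>u. \<exists>x\<in>X. suffix x u \<or> suffix u x" "\<forall>u. \<exists>y\<in>Y. suffix y u \<or> suffix u y"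
  shows "\<exists>e\<in>conc X Y. suffix e z \<or> suffix z e"
proof -
  obtain y where y: "y \<in> Y" "suffix y z \<or> suffix z y" using assms(2) by blast
  show ?thesis
  proof (cases "suffix y z")
    case True
    then obtain r where r: "z = r @ y" by (auto simp: suffix_def)
    obtain x where x: "x \<in> X" "suffix x r \<or> suffix r x" using assms(1) by blast
    have "x @ y \<in> conc X Y" using x y conc_iff by blast
    moreover have "suffix (x@y) z \<or> suffix z (x@y)" using x r by (auto simp: suffix_def)
    ultimately show ?thesis by blast
  next
    case False
    hence zx: "suffix z y" using y by blast
    obtain x where x: "x \<in> X" using assms(1) by blast
    have "x @ y \<in> conc X Y" using x y conc_iff by blast
    moreover have "suffix z (x@y)" using zx by (metis suffix_appendI)
    ultimately show ?thesis by blast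
  qed
qed

lemma maxp_of_complete:
  assumes "prefix_code X" "\<forall>u. \<exists>x\<in>X. prefix x u \<or> prefix u x"
  shows "maximal_prefix_code X"
  unfolding maximal_prefix_code_def
proof (intro conjI allI impI assms(1))
  fix Z assume Z: "prefix_code Z \<and> X \<subseteq> Z"
  have "Z \<subseteq> X"
  proof
    fix z assume "z \<in> Z"
    then obtain x where "x \<in> X" "prefix x z \<or> prefix z x" using assms(2) by blast
    hence "x = z" using pc_eq[of Z x z] Z \<open>z\<in>Z\<close> by blast
    thus "z \<in> X" using \<open>x\<in>X\<close> by simp
  qed
  thus "Z = X" using Z by blast
qed

lemma maxs_of_complete:
  assumes "suffix_code X" "\<forall>u. \<exists>x\<in>X. suffix x u \<or> suffix u x"
  shows "maximal_suffix_code X"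
  unfolding maximal_suffix_code_def
proof (intro conjI allI impI assms(1))
  fix Z assume Z: "suffix_code Z \<and> X \<subseteq> Z"
  have "Z \<subseteq> X"
  proof
    fix z assume "z \<in> Z"
    then obtain x where "x \<in> X" "suffix x z \<or> suffix z x" using assms(2) by blast
    hence "x = z" using sc_eq[of Z x z] Z \<open>z\<in>Z\<close> by blast
    thus "z \<in> X" using \<open>x\<in>X\<close> by simp
  qed
  thus "Z = X" using Z by blast
qed

lemma maxb_of_complete:
  assumes "bifix_code X" "\<forall>u. \<exists>x\<in>X. prefix x u \<or> prefix u x"
  shows "maximal_bifix_code X"
  unfolding maximal_bifix_code_def
proof (intro conjI allI impI assms(1))
  fix Z assume Z: "bifix_code Z \<and> X \<subseteq> Z"
  have "Z \<subseteq> X"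
  proof
    fix z assume "z \<in> Z"
    then obtain x where "x \<in> X" "prefix x z \<or> prefix z x" using assms(2) by blast
    hence "x = z" using pc_eq[of Z x z] Z \<open>z\<in>Z\<close> unfolding bifix_code_def by blast
    thus "z \<in> X" using \<open>x\<in>X\<close> by simp
  qed
  thus "Z = X" using Z by blast
qed

lemma mono_conc: "X \<subseteq> Z \<Longrightarrow> conc X Y \<subseteq> conc Z Y"
  unfolding conc_def by blast
lemma mono_conc2: "X \<subseteq> Z \<Longrightarrow> conc Y X \<subseteq> conc Y Z"
  unfolding conc_def by blast

lemma maxp_left:
  assumes "maximal_prefix_code (conc X Y)" "prefix_code X" "prefix_code Y" "Y \<noteq> {}"
  shows "maximal_prefix_code X"
  unfolding maximal_prefix_code_def
proof (intro conjI allI impI assms(2))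
  fix Z assume Z: "prefix_code Z \<and> X \<subseteq> Z"
  have "prefix_code (conc Z Y)" using prefix_conc Z assms(3) by blast
  hence eq: "conc Z Y = conc X Y" using assms(1) mono_conc[of X Z Y] Z unfolding maximal_prefix_code_def by blast
  have "Z \<subseteq> X"
  proof
    fix z assume z: "z \<in> Z"
    obtain y where y: "y \<in> Y" using assms(4) by blast
    have "z @ y \<in> conc X Y" using eq z y conc_iff by blast
    then obtain x y' where xy: "x \<in> X" "y' \<in> Y" "z @ y = x @ y'" using conc_iff by blast
    have "prefix z (x@y')" using xy(3) by (metis prefix_def)
    moreover have "prefix x (x@y')" by simp
    ultimately have "prefix z x \<or> prefix x z" by (rule prefix_same_cases)
    hence "z = x" using pc_eq[of Z z x] Z z xy by blast
    thus "z \<in> X" using xy by simp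
  qed
  thus "Z = X" using Z by blast
qed

lemma maxs_right:
  assumes "maximal_suffix_code (conc Y X)" "suffix_code X" "suffix_code Y" "Y \<noteq> {}"
  shows "maximal_suffix_code X"
  unfolding maximal_suffix_code_def
proof (intro conjI allI impI assms(2))
  fix Z assume Z: "suffix_code Z \<and> X \<subseteq> Z"
  have "suffix_code (conc Y Z)" using suffix_conc Z assms(3) by blast
  hence eq: "conc Y Z = conc Y X" using assms(1) mono_conc2[of X Z Y] Z unfolding maximal_suffix_code_def by blast
  have "Z \<subseteq> X"
  proof
    fix z assume z: "z \<in> Z"
    obtain y where y: "y \<in> Y" using assms(4) by blast
    have "y @ z \<in> conc Y X" using eq z y conc_iff by blast
    then obtain x y' where xy: "y' \<in> Y" "x \<in> X" "y @ z = y' @ x" using conc_iff by blast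
    have "suffix z (y'@x)" using xy(3) by (metis suffix_def)
    moreover have "suffix x (y'@x)" by (simp add: suffix_def)
    ultimately have "suffix z x \<or> suffix x z" by (rule suffix_same_cases)
    hence "z = x" using sc_eq[of Z z x] Z z xy by blast
    thus "z \<in> X" using xy by simp
  qed
  thus "Z = X" using Z by blast
qed

lemma maxb_left:
  assumes "maximal_bifix_code (conc X Y)" "bifix_code X" "bifix_code Y" "Y \<noteq> {}"
  shows "maximal_bifix_code X"
  unfolding maximal_bifix_code_def
proof (intro conjI allI impI assms(2))
  fix Z assume Z: "bifix_code Z \<and> X \<subseteq> Z"
  have "bifix_code (conc Z Y)" using prefix_conc suffix_conc Z assms(3) unfolding bifix_code_def by blast
  hence eq: "conc Z Y = conc X Y" using assms(1) mono_conc[of X Z Y] Z unfolding maximal_bifix_code_def by blast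
  have "Z \<subseteq> X"
  proof
    fix z assume z: "z \<in> Z"
    obtain y where y: "y \<in> Y" using assms(4) by blast
    have "z @ y \<in> conc X Y" using eq z y conc_iff by blast
    then obtain x y' where xy: "x \<in> X" "y' \<in> Y" "z @ y = x @ y'" using conc_iff by blast
    have "prefix z (x@y')" using xy(3) by (metis prefix_def)
    moreover have "prefix x (x@y')" by simp
    ultimately have "prefix z x \<or> prefix x z" by (rule prefix_same_cases)
    hence "z = x" using pc_eq[of Z z x] Z z xy unfolding bifix_code_def by blast
    thus "z \<in> X" using xy by simp
  qed
  thus "Z = X" using Z by blast
qed

lemma thin_left: assumes "thin (conc X Y)" "Y \<noteq> {}" shows "thin X"
proof -
  obtain w where w: "\<forall>z\<in>conc X Y. \<not> sublist w z" using assms(1) unfolding thin_def by blast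
  obtain y where y: "y \<in> Y" using assms(2) by blast
  have "\<forall>x\<in>X. \<not> sublist w x"
  proof
    fix x assume "x \<in> X"
    hence "x@y \<in> conc X Y" using y conc_iff by blast
    thus "\<not> sublist w x" using w using sublist_order.order_trans[OF _ sublist_append_rightI] by blast
  qed
  thus ?thesis unfolding thin_def by blast
qed

lemma thin_right: assumes "thin (conc Y X)" "Y \<noteq> {}" shows "thin X"
proof -
  obtain w where w: "\<forall>z\<in>conc Y X. \<not> sublist w z" using assms(1) unfolding thin_def by blast
  obtain y where y: "y \<in> Y" using assms(2) by blast
  have "\<forall>x\<in>X. \<not> sublist w x"
  proof
    fix x assume "x \<in> X"
    hence "y@x \<in> conc Y X" using y conc_iff by blast
    thus "\<not> sublist w x" using w using sublist_order.order_trans[OF _ sublist_append_leftI] by blast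
  qed
  thus ?thesis unfolding thin_def by blast
qed

lemma sublist_app_split:
  assumes "sublist (a @ b) (x @ y)" shows "sublist a x \<or> sublist b y"
proof -
  from assms[unfolded sublist_append] show ?thesis
  proof (elim disjE exE conjE)
    assume "sublist (a @ b) x" thus ?thesis using sublist_order.order_trans[OF sublist_append_rightI] by blast
  next
    assume "sublist (a @ b) y" thus ?thesis using sublist_order.order_trans[OF sublist_append_leftI] by blast
  next
    fix xs1 xs2 assume h: "a @ b = xs1 @ xs2" "suffix xs1 x" "prefix xs2 y"
    from h(1) obtain c where "(xs1 = a @ c \<and> b = c @ xs2) \<or> (a = xs1 @ c \<and> xs2 = c @ b)"
      by (auto simp: append_eq_append_conv2)
    thus ?thesis
    proof
      assume "xs1 = a @ c \<and> b = c @ xs2"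
      hence "sublist a xs1" by simp
      thus ?thesis using h(2) using sublist_order.order_trans suffix_imp_sublist by blast
    next
      assume "a = xs1 @ c \<and> xs2 = c @ b"
      hence "sublist b xs2" by simp
      thus ?thesis using h(3) using sublist_order.order_trans prefix_imp_sublist by blast
    qed
  qed
qed

lemma thin_conc: assumes "thin X" "thin Y" shows "thin (conc X Y)"
proof -
  obtain w where w: "\<forall>x\<in>X. \<not> sublist w x" using assms(1) unfolding thin_def by blast
  obtain w' where w': "\<forall>y\<in>Y. \<not> sublist w' y" using assms(2) unfolding thin_def by blast
  have "\<forall>z\<in>conc X Y. \<not> sublist (w@w') z"
  proof
    fix z assume "z \<in> conc X Y"
    then obtain x y where xy: "x\<in>X" "y\<in>Y" "z = x@y" using conc_iff by blast
    show "\<not> sublist (w@w') z"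
    proof
      assume "sublist (w@w') z"
      hence "sublist w x \<or> sublist w' y" using xy(3) sublist_app_split by blast
      thus False using w w' xy by blast
    qed
  qed
  thus ?thesis unfolding thin_def by blast
qed

lemma bern_nat: "(a::nat)^q * (a + q) \<le> (a+1)^q * a"
proof (induction q)
  case 0 thus ?case by simp
next
  case (Suc q)
  have e: "a*(a+q+1) \<le> (a+1)*(a+q)" by (simp add: algebra_simps)
  have "a^(Suc q) * (a + Suc q) = a^q * (a*(a+q+1))" by (simp add: algebra_simps)
  also have "\<dots> \<le> a^q * ((a+1)*(a+q))" using e by (rule mult_le_mono2)
  also have "\<dots> = (a+1) * (a^q * (a+q))" by (simp add: algebra_simps)
  also have "\<dots> \<le> (a+1) * ((a+1)^q * a)" using Suc.IH by (rule mult_le_mono2)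
  also have "\<dots> = (a+1)^(Suc q) * a" by (simp add: algebra_simps)
  finally show ?case .
qed

lemma arith_contra: assumes "(K::nat) \<ge> 1" shows "\<exists>q. C * (K-1)^q < K^q"
proof (cases "K = 1")
  case True thus ?thesis by (intro exI[of _ 1]) simp
next
  case False
  define a where "a = K - 1"
  have a1: "a \<ge> 1" and K: "K = a + 1" using assms False unfolding a_def by auto
  define q where "q = C * a"
  have "a^q * a * (1 + C) = a^q * (a + q)" unfolding q_def by (simp add: algebra_simps)
  also have "\<dots> \<le> (a+1)^q * a" by (rule bern_nat)
  finally have 1: "a^q * a * (1 + C) \<le> (a+1)^q * a" .
  have pos: "a^q * a > 0" using a1 by simp
  have "C * a^q * a < a^q * a * (1 + C)" using pos by (simp add: algebra_simps)
  hence "C * a^q * a < (a+1)^q * a" using 1 by linarith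
  hence "C * a^q < (a+1)^q" by (simp add: mult.assoc)
  thus ?thesis unfolding K a_def[symmetric] using K by (intro exI[of _ q]) simp
qed

lemma suffix_take: "suffix x s \<Longrightarrow> take (length s - length x) s @ x = s"
  by (auto simp: suffix_def)

lemma hard:
  fixes X :: "('a::finite) list set"
  assumes mb: "maximal_bifix_code X" and th: "thin X" and ne: "X \<noteq> {}"
  shows "\<exists>x\<in>X. prefix x u \<or> prefix u x"
proof (rule ccontr)
  assume nc: "\<not> ?thesis"
  obtain w where w: "\<forall>x\<in>X. \<not> sublist w x" using th unfolding thin_def by blast
  have bif: "bifix_code X" using mb unfolding maximal_bifix_code_def by blast
  hence pX: "prefix_code X" and sX: "suffix_code X" unfolding bifix_code_def by auto
  have une: "u \<noteq> []" using nc ne by auto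
  have wne: "w \<noteq> []" using w ne by auto
  have step1: "\<exists>x\<in>X. suffix x (w @ t)" for t
  proof -
    let ?y = "u @ w @ t"
    have "\<exists>x\<in>X. suffix x ?y"
    proof (rule ccontr)
      assume ns: "\<not> (\<exists>x\<in>X. suffix x ?y)"
      have yX: "?y \<notin> X" using ns by auto
      have yne: "?y \<in> plus_words" using une by (simp add: plus_words_def)
      have p1: "\<not> prefix x ?y" if "x \<in> X" for x
      proof
        assume "prefix x ?y"
        moreover have "prefix u ?y" by simp
        ultimately have "prefix x u \<or> prefix u x" by (rule prefix_same_cases)
        thus False using nc that by blast
      qed
      have p2: "\<not> prefix ?y x" if "x \<in> X" for x
      proof
        assume "prefix ?y x"
        hence "prefix u x" using prefix_order.trans[of u ?y x] by simp
        thus False using nc that by blast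
      qed
      have s2: "\<not> suffix ?y x" if "x \<in> X" for x
      proof
        assume "suffix ?y x"
        moreover have "sublist w ?y" by (metis sublist_appendI)
        ultimately have "sublist w x" using sublist_order.order_trans suffix_imp_sublist by blast
        thus False using w that by blast
      qed
      have "prefix_code (insert ?y X)"
        unfolding prefix_code_def
      proof (intro conjI ballI)
        show "insert ?y X \<subseteq> plus_words" using pX yne unfolding prefix_code_def by blast
      next
        fix a b assume a: "a \<in> insert ?y X" and b: "b \<in> insert ?y X"
        show "\<not> strict_prefix a b"
        proof (cases "a = ?y")
          case True
          show ?thesis
          proof (cases "b = ?y")
            case True thus ?thesis using \<open>a = ?y\<close> by (simp add: strict_prefix_def)
          next
            case False hence "b \<in> X" using b by blast
            thus ?thesis using p2 \<open>a = ?y\<close> by (simp add: strict_prefix_def)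
          qed
        next
          case False hence aX: "a \<in> X" using a by blast
          show ?thesis
          proof (cases "b = ?y")
            case True thus ?thesis using p1[OF aX] by (simp add: strict_prefix_def)
          next
            case False hence "b \<in> X" using b by blast
            thus ?thesis using pX aX unfolding prefix_code_def by blast
          qed
        qed
      qed
      moreover have "suffix_code (insert ?y X)"
        unfolding suffix_code_def
      proof (intro conjI ballI)
        show "insert ?y X \<subseteq> plus_words" using sX yne unfolding suffix_code_def by blast
      next
        fix a b assume a: "a \<in> insert ?y X" and b: "b \<in> insert ?y X"
        show "\<not> strict_suffix a b"
        proof (cases "a = ?y")
          case True
          show ?thesis
          proof (cases "b = ?y")
            case True thus ?thesis using \<open>a = ?y\<close> by (simp add: strict_suffix_def)
          next
            case False hence "b \<in> X" using b by blast
            thus ?thesis using s2 \<open>a = ?y\<close> by (simp add: strict_suffix_def)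
          qed
        next
          case False hence aX: "a \<in> X" using a by blast
          show ?thesis
          proof (cases "b = ?y")
            case True thus ?thesis using ns aX by (auto simp add: strict_suffix_def)
          next
            case False hence "b \<in> X" using b by blast
            thus ?thesis using sX aX unfolding suffix_code_def by blast
          qed
        qed
      qed
      ultimately have "bifix_code (insert ?y X)" unfolding bifix_code_def by blast
      hence "insert ?y X = X" using mb unfolding maximal_bifix_code_def by blast
      thus False using yX by blast
    qed
    then obtain x where x: "x \<in> X" "suffix x (u @ (w @ t))" by auto
    from suffix_append[THEN iffD1, OF x(2)] have "suffix x (w @ t)"
    proof (elim disjE)
      assume "suffix x (w @ t)" thus ?thesis .
    next
      assume "\<exists>xs'. x = xs' @ w @ t \<and> suffix xs' u"
      then obtain xs' where "x = xs' @ w @ t" by blast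
      hence "sublist w x" by (metis sublist_appendI)
      thus ?thesis using w x(1) by blast
    qed
    thus ?thesis using x(1) by blast
  qed
  define k where "k = card (UNIV::'a set)"
  have k1: "k \<ge> 1" unfolding k_def using finite_UNIV_card_ge_0[where ?'a='a] by simp
  define W where "W n = {s::'a list. length s = n}" for n
  have finW: "finite (W n)" for n
    using finite_lists_length_eq[of "UNIV::'a set" n] unfolding W_def by simp
  have cardW: "card (W n) = k^n" for n
    using card_lists_length_eq[of "UNIV::'a set" n] unfolding W_def k_def by simp
  define A where "A n = {s \<in> W n. \<not> sublist w s}" for n
  have finA: "finite (A n)" for n using finW unfolding A_def by simp
  have cardAW: "card (A n) \<le> k^n" for n
    using card_mono[OF finW, of "A n" n] cardW unfolding A_def by auto
  have cnt: "k^(n - length u) \<le> card (A n)" if nu: "length u \<le> n" for n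
  proof -
    define P where "P = {s \<in> W n. \<exists>x\<in>X. prefix x s}"
    define S where "S = {s \<in> W n. \<exists>x\<in>X. suffix x s}"
    define U where "U = {s \<in> W n. prefix u s}"
    have finP: "finite P" using finW unfolding P_def by simp
    have finS: "finite S" using finW unfolding S_def by simp
    have finU: "finite U" using finW unfolding U_def by simp
    have "\<forall>s\<in>S. \<exists>x. x \<in> X \<and> suffix x s" unfolding S_def by blast
    then obtain sel where sel: "\<forall>s\<in>S. sel s \<in> X \<and> suffix (sel s) s" by metis
    define h where "h s = sel s @ take (length s - length (sel s)) s" for s
    have inj: "inj_on h S"
    proof (rule inj_onI)
      fix s1 s2 assume s1: "s1 \<in> S" and s2: "s2 \<in> S" and eq: "h s1 = h s2"
      have "prefix (sel s1) (h s2)" using eq unfolding h_def by (metis prefixI)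
      moreover have "prefix (sel s2) (h s2)" unfolding h_def by simp
      ultimately have "prefix (sel s1) (sel s2) \<or> prefix (sel s2) (sel s1)" by (rule prefix_same_cases)
      hence se: "sel s1 = sel s2" using pc_eq[OF pX] sel s1 s2 by blast
      hence te: "take (length s1 - length (sel s1)) s1 = take (length s2 - length (sel s2)) s2"
        using eq unfolding h_def by simp
      have "s1 = take (length s1 - length (sel s1)) s1 @ sel s1" using suffix_take sel s1 by metis
      also have "\<dots> = take (length s2 - length (sel s2)) s2 @ sel s2" using te se by simp
      also have "\<dots> = s2" using suffix_take sel s2 by metis
      finally show "s1 = s2" .
    qed
    have img: "h ` S \<subseteq> P"
    proof
      fix p assume "p \<in> h ` S"
      then obtain s where s: "s \<in> S" "p = h s" by blast
      have le: "length (sel s) \<le> length s" using sel s(1) by (simp add: suffix_def) (metis length_append le_add2)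
      have "length p = n" using s le unfolding h_def S_def W_def by auto
      moreover have "prefix (sel s) p" using s unfolding h_def by simp
      ultimately show "p \<in> P" using sel s(1) unfolding P_def W_def by blast
    qed
    have SP: "card S \<le> card P" using card_inj_on_le[OF inj img finP] .
    have disj: "P \<inter> U = {}"
    proof -
      { fix s assume "s \<in> P" "s \<in> U"
        then obtain x where x: "x \<in> X" "prefix x s" and "prefix u s" unfolding P_def U_def by blast
        hence "prefix x u \<or> prefix u x" using prefix_same_cases by blast
        hence False using nc x by blast }
      thus ?thesis by blast
    qed
    have "card P + card U = card (P \<union> U)" using card_Un_disjoint[OF finP finU disj] by simp
    also have "\<dots> \<le> card (W n)" using finW by (intro card_mono) (auto simp: P_def U_def)
    finally have PU: "card P + card U \<le> k^n" using cardW by simp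
    have "W n \<subseteq> S \<union> A n"
    proof
      fix s assume s: "s \<in> W n"
      show "s \<in> S \<union> A n"
      proof (cases "sublist w s")
        case True
        then obtain p t where "s = p @ w @ t" unfolding sublist_def by blast
        moreover obtain x where "x \<in> X" "suffix x (w @ t)" using step1 by blast
        ultimately have "x \<in> X" "suffix x s" using suffix_appendI by blast+
        thus ?thesis using s unfolding S_def by blast
      next
        case False thus ?thesis using s unfolding A_def by blast
      qed
    qed
    hence "k^n \<le> card (S \<union> A n)" using cardW card_mono[OF finite_UnI[OF finS finA]] by metis
    also have "\<dots> \<le> card S + card (A n)" by (rule card_Un_le)
    finally have SA: "k^n \<le> card S + card (A n)" .
    have "U = (\<lambda>r. u @ r) ` W (n - length u)"
    proof
      show "U \<subseteq> (\<lambda>r. u @ r) ` W (n - length u)"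
      proof
        fix s assume "s \<in> U"
        then obtain r where "s = u @ r" "length s = n" unfolding U_def W_def prefix_def by blast
        thus "s \<in> (\<lambda>r. u @ r) ` W (n - length u)" unfolding W_def by auto
      qed
      show "(\<lambda>r. u @ r) ` W (n - length u) \<subseteq> U" using nu unfolding U_def W_def by auto
    qed
    hence "card U = card (W (n - length u))" by (simp add: card_image inj_on_def)
    hence "card U = k^(n - length u)" using cardW by simp
    thus ?thesis using SP PU SA by linarith
  qed
  define m where "m = length w"
  have submult: "card (A (a + b)) \<le> card (A a) * card (A b)" for a b
  proof -
    have sub: "A (a + b) \<subseteq> (\<lambda>(p,q). p @ q) ` (A a \<times> A b)"
    proof
      fix s assume s: "s \<in> A (a + b)"
      hence ls: "length s = a + b" and nw: "\<not> sublist w s" unfolding A_def W_def by auto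
      have 1: "take a s \<in> A a"
      proof -
        have "sublist (take a s) s" by (rule prefix_imp_sublist[OF take_is_prefix])
        hence "\<not> sublist w (take a s)" using nw sublist_order.order_trans by blast
        thus ?thesis using ls unfolding A_def W_def by simp
      qed
      have 2: "drop a s \<in> A b"
      proof -
        have "sublist (drop a s) s" by (rule suffix_imp_sublist[OF suffix_drop])
        hence "\<not> sublist w (drop a s)" using nw sublist_order.order_trans by blast
        thus ?thesis using ls unfolding A_def W_def by simp
      qed
      have "s = (\<lambda>(p,q). p @ q) (take a s, drop a s)" by simp
      moreover have "(take a s, drop a s) \<in> A a \<times> A b" using 1 2 by simp
      ultimately show "s \<in> (\<lambda>(p,q). p @ q) ` (A a \<times> A b)" by (rule image_eqI)
    qed
    have fin: "finite ((\<lambda>(p,q). p @ q) ` (A a \<times> A b))" using finA by simp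
    have "card (A (a + b)) \<le> card ((\<lambda>(p,q). p @ q) ` (A a \<times> A b))"
      using card_mono[OF fin sub] .
    also have "\<dots> \<le> card (A a \<times> A b)" by (rule card_image_le) (simp add: finA)
    finally show ?thesis by (simp add: card_cartesian_product)
  qed
  have Am: "card (A m) \<le> k^m - 1"
  proof -
    have "A m \<subseteq> W m - {w}" unfolding A_def W_def m_def by auto
    hence "card (A m) \<le> card (W m - {w})" using finW by (intro card_mono) auto
    also have "\<dots> = k^m - 1" using cardW by (simp add: W_def m_def)
    finally show ?thesis .
  qed
  have Aq: "card (A (q * m)) \<le> (k^m - 1)^q" for q
  proof (induction q)
    case 0
    have "A 0 \<subseteq> {[]}" unfolding A_def W_def by auto
    hence "card (A 0) \<le> 1" by (metis card_mono finite.intros card.empty card_insert_disjoint empty_iff One_nat_def)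
    thus ?case by simp
  next
    case (Suc q)
    have "card (A (Suc q * m)) = card (A (m + q * m))" by simp
    also have "\<dots> \<le> card (A m) * card (A (q*m))" by (rule submult)
    also have "\<dots> \<le> (k^m - 1) * (k^m - 1)^q" using Am Suc.IH by (rule mult_le_mono)
    finally show ?case by simp
  qed
  have main: "k^(q*m) * 1 \<le> (k^m - 1)^q * k^(length u)" for q
  proof -
    have "k^(q*m) = k^(q*m + length u - length u)" by simp
    also have "\<dots> \<le> card (A (q*m + length u))" by (rule cnt) simp
    also have "\<dots> \<le> card (A (q*m)) * card (A (length u))" by (rule submult)
    also have "\<dots> \<le> (k^m - 1)^q * k^(length u)" using Aq cardAW by (rule mult_le_mono)
    finally show ?thesis by simp
  qed
  have K1: "k^m \<ge> 1" using k1 by simp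
  obtain q where "k^(length u) * (k^m - 1)^q < (k^m)^q" using arith_contra[OF K1] by blast
  moreover have "(k^m)^q = k^(q*m)" by (simp add: power_mult mult.commute)
  ultimately show False using main[of q] by (simp add: mult.commute)
qed


lemma alt_pp: "prefix_code X \<Longrightarrow> prefix_code Y \<Longrightarrow> X \<noteq> {} \<Longrightarrow> Y \<noteq> {} \<Longrightarrow> alt_induced (conc X Y)"
  unfolding alt_induced_def using alt_prefix by blast

lemma alt_ss: "suffix_code X \<Longrightarrow> suffix_code Y \<Longrightarrow> X \<noteq> {} \<Longrightarrow> Y \<noteq> {} \<Longrightarrow> alt_induced (conc X Y)"
  unfolding alt_induced_def using alt_suffix by blast

lemma part1:
  assumes "X \<noteq> {}" "Y \<noteq> {}" "X \<subseteq> plus_words" "Y \<subseteq> plus_words"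
  shows "(alt_induced (conc X Y) \<and> prefix_code (conc X Y) \<and>
      alt_induced (conc Y X) \<and> prefix_code (conc Y X))
       \<longleftrightarrow> prefix_code X \<and> prefix_code Y"
  using assms prefix_right[of X Y] prefix_right[of Y X] prefix_conc[of X Y] prefix_conc[of Y X]
    alt_pp[of X Y] alt_pp[of Y X] by blast

lemma part3:
  assumes "X \<noteq> {}" "Y \<noteq> {}" "X \<subseteq> plus_words" "Y \<subseteq> plus_words"
  shows "(alt_induced (conc X Y) \<and> suffix_code (conc X Y) \<and>
      alt_induced (conc Y X) \<and> suffix_code (conc Y X))
       \<longleftrightarrow> suffix_code X \<and> suffix_code Y"
  using assms suffix_left[of X Y] suffix_left[of Y X] suffix_conc[of X Y] suffix_conc[of Y X]
    alt_ss[of X Y] alt_ss[of Y X] by blast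

lemma part5:
  assumes "X \<noteq> {}" "Y \<noteq> {}" "X \<subseteq> plus_words" "Y \<subseteq> plus_words"
  shows "(alt_induced (conc X Y) \<and> bifix_code (conc X Y) \<and>
      alt_induced (conc Y X) \<and> bifix_code (conc Y X))
       \<longleftrightarrow> bifix_code X \<and> bifix_code Y"
  using part1[OF assms] part3[OF assms] unfolding bifix_code_def by blast

lemma part2:
  assumes ne: "X \<noteq> {}" "Y \<noteq> {}" and pl: "X \<subseteq> plus_words" "Y \<subseteq> plus_words"
  shows "(alt_induced (conc X Y) \<and> maximal_prefix_code (conc X Y) \<and>
      alt_induced (conc Y X) \<and> maximal_prefix_code (conc Y X))
       \<longleftrightarrow> maximal_prefix_code X \<and> maximal_prefix_code Y"
proof
  assume h: "alt_induced (conc X Y) \<and> maximal_prefix_code (conc X Y) \<and>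
      alt_induced (conc Y X) \<and> maximal_prefix_code (conc Y X)"
  hence pXY: "prefix_code (conc X Y)" "prefix_code (conc Y X)" unfolding maximal_prefix_code_def by auto
  have pY: "prefix_code Y" using prefix_right[OF pXY(1) ne(1) pl(2)] .
  have pX: "prefix_code X" using prefix_right[OF pXY(2) ne(2) pl(1)] .
  show "maximal_prefix_code X \<and> maximal_prefix_code Y"
    using maxp_left[OF _ pX pY ne(2)] maxp_left[OF _ pY pX ne(1)] h by blast
next
  assume h: "maximal_prefix_code X \<and> maximal_prefix_code Y"
  hence pX: "prefix_code X" and pY: "prefix_code Y" unfolding maximal_prefix_code_def by auto
  have cX: "\<forall>u. \<exists>x\<in>X. prefix x u \<or> prefix u x" using maxp_complete h ne by blast
  have cY: "\<forall>u. \<exists>x\<in>Y. prefix x u \<or> prefix u x" using maxp_complete h ne by blast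
  have "maximal_prefix_code (conc X Y)"
    using maxp_of_complete[OF prefix_conc[OF pX pY]] pcomp_conc[OF cX cY] by blast
  moreover have "maximal_prefix_code (conc Y X)"
    using maxp_of_complete[OF prefix_conc[OF pY pX]] pcomp_conc[OF cY cX] by blast
  ultimately show "alt_induced (conc X Y) \<and> maximal_prefix_code (conc X Y) \<and>
      alt_induced (conc Y X) \<and> maximal_prefix_code (conc Y X)"
    using alt_pp[OF pX pY ne] alt_pp[OF pY pX ne(2,1)] by blast
qed

lemma part4:
  assumes ne: "X \<noteq> {}" "Y \<noteq> {}" and pl: "X \<subseteq> plus_words" "Y \<subseteq> plus_words"
  shows "(alt_induced (conc X Y) \<and> maximal_suffix_code (conc X Y) \<and>
      alt_induced (conc Y X) \<and> maximal_suffix_code (conc Y X))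
       \<longleftrightarrow> maximal_suffix_code X \<and> maximal_suffix_code Y"
proof
  assume h: "alt_induced (conc X Y) \<and> maximal_suffix_code (conc X Y) \<and>
      alt_induced (conc Y X) \<and> maximal_suffix_code (conc Y X)"
  hence pXY: "suffix_code (conc X Y)" "suffix_code (conc Y X)" unfolding maximal_suffix_code_def by auto
  have pX: "suffix_code X" using suffix_left[OF pXY(1) ne(2) pl(1)] .
  have pY: "suffix_code Y" using suffix_left[OF pXY(2) ne(1) pl(2)] .
  show "maximal_suffix_code X \<and> maximal_suffix_code Y"
    using maxs_right[OF _ pX pY ne(2)] maxs_right[OF _ pY pX ne(1)] h by blast
next
  assume h: "maximal_suffix_code X \<and> maximal_suffix_code Y"
  hence pX: "suffix_code X" and pY: "suffix_code Y" unfolding maximal_suffix_code_def by auto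
  have cX: "\<forall>u. \<exists>x\<in>X. suffix x u \<or> suffix u x" using maxs_complete h ne by blast
  have cY: "\<forall>u. \<exists>x\<in>Y. suffix x u \<or> suffix u x" using maxs_complete h ne by blast
  have "maximal_suffix_code (conc X Y)"
    using maxs_of_complete[OF suffix_conc[OF pX pY]] scomp_conc[OF cX cY] by blast
  moreover have "maximal_suffix_code (conc Y X)"
    using maxs_of_complete[OF suffix_conc[OF pY pX]] scomp_conc[OF cY cX] by blast
  ultimately show "alt_induced (conc X Y) \<and> maximal_suffix_code (conc X Y) \<and>
      alt_induced (conc Y X) \<and> maximal_suffix_code (conc Y X)"
    using alt_ss[OF pX pY ne] alt_ss[OF pY pX ne(2,1)] by blast
qed

lemma part6:
  fixes X Y :: "('a::finite) list set"
  assumes ne: "X \<noteq> {}" "Y \<noteq> {}" and pl: "X \<subseteq> plus_words" "Y \<subseteq> plus_words"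
  shows "(alt_induced (conc X Y) \<and> thin (conc X Y) \<and> maximal_bifix_code (conc X Y) \<and>
      alt_induced (conc Y X) \<and> thin (conc Y X) \<and> maximal_bifix_code (conc Y X))
       \<longleftrightarrow> thin X \<and> maximal_bifix_code X \<and> thin Y \<and> maximal_bifix_code Y"
proof
  assume h: "alt_induced (conc X Y) \<and> thin (conc X Y) \<and> maximal_bifix_code (conc X Y) \<and>
      alt_induced (conc Y X) \<and> thin (conc Y X) \<and> maximal_bifix_code (conc Y X)"
  hence "bifix_code (conc X Y)" "bifix_code (conc Y X)" unfolding maximal_bifix_code_def by auto
  hence bX: "bifix_code X" and bY: "bifix_code Y" using part5[OF assms] h by blast+
  show "thin X \<and> maximal_bifix_code X \<and> thin Y \<and> maximal_bifix_code Y"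
    using thin_left[of X Y] thin_left[of Y X] maxb_left[OF _ bX bY ne(2)] maxb_left[OF _ bY bX ne(1)]
      h ne by blast
next
  assume h: "thin X \<and> maximal_bifix_code X \<and> thin Y \<and> maximal_bifix_code Y"
  hence bX: "bifix_code X" and bY: "bifix_code Y" unfolding maximal_bifix_code_def by auto
  hence pX: "prefix_code X" and pY: "prefix_code Y" unfolding bifix_code_def by auto
  have cX: "\<forall>u. \<exists>x\<in>X. prefix x u \<or> prefix u x" using hard h ne by blast
  have cY: "\<forall>u. \<exists>x\<in>Y. prefix x u \<or> prefix u x" using hard h ne by blast
  have bXY: "bifix_code (conc X Y)" "bifix_code (conc Y X)"
    using bX bY prefix_conc suffix_conc unfolding bifix_code_def by blast+
  have "maximal_bifix_code (conc X Y)"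
    using maxb_of_complete[OF bXY(1)] pcomp_conc[OF cX cY] by blast
  moreover have "maximal_bifix_code (conc Y X)"
    using maxb_of_complete[OF bXY(2)] pcomp_conc[OF cY cX] by blast
  ultimately show "alt_induced (conc X Y) \<and> thin (conc X Y) \<and> maximal_bifix_code (conc X Y) \<and>
      alt_induced (conc Y X) \<and> thin (conc Y X) \<and> maximal_bifix_code (conc Y X)"
    using alt_pp[OF pX pY ne] alt_pp[OF pY pX ne(2,1)] thin_conc[of X Y] thin_conc[of Y X] h by blast
qed

theorem theoremT:
  fixes X Y :: "('a::finite) list set"
  assumes "X \<noteq> {}" and "Y \<noteq> {}" and "X \<subseteq> plus_words" and "Y \<subseteq> plus_words"
  shows
   "((alt_induced (conc X Y) \<and> prefix_code (conc X Y) \<and>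
      alt_induced (conc Y X) \<and> prefix_code (conc Y X))
       \<longleftrightarrow> prefix_code X \<and> prefix_code Y) \<and>
    ((alt_induced (conc X Y) \<and> maximal_prefix_code (conc X Y) \<and>
      alt_induced (conc Y X) \<and> maximal_prefix_code (conc Y X))
       \<longleftrightarrow> maximal_prefix_code X \<and> maximal_prefix_code Y) \<and>
    ((alt_induced (conc X Y) \<and> suffix_code (conc X Y) \<and>
      alt_induced (conc Y X) \<and> suffix_code (conc Y X))
       \<longleftrightarrow> suffix_code X \<and> suffix_code Y) \<and>
    ((alt_induced (conc X Y) \<and> maximal_suffix_code (conc X Y) \<and>
      alt_induced (conc Y X) \<and> maximal_suffix_code (conc Y X))
       \<longleftrightarrow> maximal_suffix_code X \<and> maximal_suffix_code Y) \<and>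
    ((alt_induced (conc X Y) \<and> bifix_code (conc X Y) \<and>
      alt_induced (conc Y X) \<and> bifix_code (conc Y X))
       \<longleftrightarrow> bifix_code X \<and> bifix_code Y) \<and>
    ((alt_induced (conc X Y) \<and> thin (conc X Y) \<and> maximal_bifix_code (conc X Y) \<and>
      alt_induced (conc Y X) \<and> thin (conc Y X) \<and> maximal_bifix_code (conc Y X))
       \<longleftrightarrow> thin X \<and> maximal_bifix_code X \<and> thin Y \<and> maximal_bifix_code Y)"
  using part1[OF assms] part2[OF assms] part3[OF assms] part4[OF assms] part5[OF assms] part6[OF assms]
  by blast

end
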